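(* Under the hypotheses of the previous theorem (model $\mathfrak{M}$, variable $x$, Boolean expression $f$, formulas $\theta,\varphi_1,\dots,\varphi_n$ with each $\varphi_i$ non-dependent of $x$ in $\mathfrak{M}$ provided $\theta$, variables $z_1,\dots,z_m$ distinct from $x$ and not free in $\theta$, quantifiers $Q_1,\dots,Q_m\in\{\forall,\exists\}$), if $\mathfrak{M}\models\exists x\theta$ then $$[\![Q_mz_m\dots Q_1z_1\,f\big(\exists x(\theta\land\varphi_1),\dots,\exists x(\theta\land\varphi_n)\big)]\!]^{\mathfrak{M}}=[\![\exists x\big(\theta\land Q_mz_m\dots Q_1z_1\,f(\varphi_1,\dots,\varphi_n)\big)]\!]^{\mathfrak{M}},$$ and moreover in this equation any of the occurrences of $\exists x(\theta\land\cdot)$ may be replaced by $\forall x(\theta\to\cdot)$ without changing the meanings.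
   Context: Work in first-order logic with equality over a relational signature, with countably many variables $v_1,v_2,\dots$. A model $\mathfrak{M}$ has nonempty universe $M$; assignments are $\bar a\in M^\omega$ ($a_i$ is the value of $v_i$); for $x=v_i$, $b\in M$, $\bar a^x_b$ is $\bar a$ with $i$-th entry replaced by $b$. $[\![\varphi]\!]^{\mathfrak{M}}=\{\bar a\in M^\omega:\mathfrak{M}\models\varphi[\bar a]\}$; $\mathfrak{M}\models\chi$ means every $\bar a$ satisfies $\chi$. A Boolean expression is built from its arguments using $\neg$ and $\land$. Definition: $\varphi$ is non-dependent of $x$ in $\mathfrak{M}$ provided $\theta$ iff for all $\bar a\in M^\omega$, $b\in M$: if $\mathfrak{M}\models\theta[\bar a]$ and $\mathfrak{M}\models\theta[\bar a^x_b]$ then ($\mathfrak{M}\models\varphi[\bar a]\iff\mathfrak{M}\models\varphi[\bar a^x_b]$). *)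

theory Defs
  imports Main
begin

datatype 'r fo =
    Eq nat nat
  | Rel 'r "nat list"
  | Neg "'r fo"
  | Conj "'r fo" "'r fo"
  | Ex nat "'r fo"

definition All :: "nat \<Rightarrow> 'r fo \<Rightarrow> 'r fo" where
  "All x \<phi> = Neg (Ex x (Neg \<phi>))"

definition Imp :: "'r fo \<Rightarrow> 'r fo \<Rightarrow> 'r fo" where
  "Imp \<phi> \<psi> = Neg (Conj \<phi> (Neg \<psi>))"

primrec fv :: "'r fo \<Rightarrow> nat set" where
  "fv (Eq i j) = {i, j}"
| "fv (Rel R is) = set is"
| "fv (Neg \<phi>) = fv \<phi>"
| "fv (Conj \<phi> \<psi>) = fv \<phi> \<union> fv \<psi>"
| "fv (Ex x \<phi>) = fv \<phi> - {x}"

text \<open>A model is given by a universe M and an interpretation I of relation symbols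
  (I R as applied to the list of arguments). Assignments are a :: nat \<Rightarrow> 'a.\<close>

primrec sat :: "'a set \<Rightarrow> ('r \<Rightarrow> 'a list \<Rightarrow> bool) \<Rightarrow> 'r fo \<Rightarrow> (nat \<Rightarrow> 'a) \<Rightarrow> bool" where
  "sat M I (Eq i j) a = (a i = a j)"
| "sat M I (Rel R is) a = I R (map a is)"
| "sat M I (Neg \<phi>) a = (\<not> sat M I \<phi> a)"
| "sat M I (Conj \<phi> \<psi>) a = (sat M I \<phi> a \<and> sat M I \<psi> a)"
| "sat M I (Ex x \<phi>) a = (\<exists>b\<in>M. sat M I \<phi> (a(x := b)))"

definition assignments :: "'a set \<Rightarrow> (nat \<Rightarrow> 'a) set" where
  "assignments M = {a. \<forall>i. a i \<in> M}"

definition meaning :: "'a set \<Rightarrow> ('r \<Rightarrow> 'a list \<Rightarrow> bool) \<Rightarrow> 'r fo \<Rightarrow> (nat \<Rightarrow> 'a) set" where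
  "meaning M I \<phi> = {a \<in> assignments M. sat M I \<phi> a}"

definition models :: "'a set \<Rightarrow> ('r \<Rightarrow> 'a list \<Rightarrow> bool) \<Rightarrow> 'r fo \<Rightarrow> bool" where
  "models M I \<chi> = (\<forall>a\<in>assignments M. sat M I \<chi> a)"

definition non_dependent ::
  "'a set \<Rightarrow> ('r \<Rightarrow> 'a list \<Rightarrow> bool) \<Rightarrow> 'r fo \<Rightarrow> nat \<Rightarrow> 'r fo \<Rightarrow> bool" where
  "non_dependent M I \<phi> x \<theta> =
     (\<forall>a\<in>assignments M. \<forall>b\<in>M.
        sat M I \<theta> a \<longrightarrow> sat M I \<theta> (a(x := b)) \<longrightarrow>
        (sat M I \<phi> a \<longleftrightarrow> sat M I \<phi> (a(x := b))))"

datatype bexp = Arg nat | BNeg bexp | BAnd bexp bexp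

primrec bargs :: "bexp \<Rightarrow> nat set" where
  "bargs (Arg i) = {i}"
| "bargs (BNeg f) = bargs f"
| "bargs (BAnd f g) = bargs f \<union> bargs g"

primrec bapp :: "bexp \<Rightarrow> 'r fo list \<Rightarrow> 'r fo" where
  "bapp (Arg i) ps = ps ! i"
| "bapp (BNeg f) ps = Neg (bapp f ps)"
| "bapp (BAnd f g) ps = Conj (bapp f ps) (bapp g ps)"

text \<open>Quantifier prefix: the list [(Q1,z1),...,(Qm,zm)], True meaning \<exists> and False meaning \<forall>;
  quants qs \<phi> = Qm zm ... Q1 z1 \<phi> (Q1 z1 innermost).\<close>
definition quant :: "bool \<Rightarrow> nat \<Rightarrow> 'r fo \<Rightarrow> 'r fo" where
  "quant q z \<phi> = (if q then Ex z \<phi> else All z \<phi>)"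

primrec quants :: "(bool \<times> nat) list \<Rightarrow> 'r fo \<Rightarrow> 'r fo" where
  "quants [] \<phi> = \<phi>"
| "quants (q # qs) \<phi> = quants qs (quant (fst q) (snd q) \<phi>)"

definition rel :: "bool \<Rightarrow> nat \<Rightarrow> 'r fo \<Rightarrow> 'r fo \<Rightarrow> 'r fo" where
  "rel e x \<theta> \<phi> = (if e then Ex x (Conj \<theta> \<phi>) else All x (Imp \<theta> \<phi>))"

end

theory Submission
  imports Defs
begin

lemma coinc: "\<forall>v\<in>fv \<phi>. a v = a' v \<Longrightarrow> sat M I \<phi> a = sat M I \<phi> a'"
proof (induction \<phi> arbitrary: a a')
  case (Rel R xs)
  then have "map a xs = map a' xs" by (simp add: map_eq_conv)
  then show ?case by (metis sat.simps(2))
next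
  case (Conj p q)
  have "sat M I p a = sat M I p a'" by (rule Conj.IH(1)) (use Conj.prems in simp)
  moreover have "sat M I q a = sat M I q a'" by (rule Conj.IH(2)) (use Conj.prems in simp)
  ultimately show ?case by simp
next
  case (Ex y \<phi>)
  have "\<And>b. sat M I \<phi> (a(y:=b)) = sat M I \<phi> (a'(y:=b))"
    by (rule Ex.IH) (use Ex.prems in auto)
  then show ?case by simp
next
  case (Eq i j) then show ?case by simp
next
  case (Neg p)
  have "sat M I p a = sat M I p a'" by (rule Neg.IH) (use Neg.prems in simp)
  then show ?case by simp
qed

lemma quants_snoc: "quants (qs @ [q]) \<psi> = quant (fst q) (snd q) (quants qs \<psi>)"
  by (induction qs arbitrary: \<psi>) auto

lemma asg_upd: "a \<in> assignments M \<Longrightarrow> b \<in> M \<Longrightarrow> a(x:=b) \<in> assignments M"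
  by (auto simp: assignments_def)

lemma rel_val:
  assumes nd: "non_dependent M I \<phi> x \<theta>" and a: "a \<in> assignments M" and b: "b \<in> M"
    and th: "sat M I \<theta> (a(x:=b))"
  shows "sat M I (rel e x \<theta> \<phi>) a = sat M I \<phi> (a(x:=b))"
proof -
  have key: "\<And>b'. b' \<in> M \<Longrightarrow> sat M I \<theta> (a(x:=b')) \<Longrightarrow>
      sat M I \<phi> (a(x:=b')) = sat M I \<phi> (a(x:=b))"
  proof -
    fix b' assume b': "b' \<in> M" "sat M I \<theta> (a(x:=b'))"
    have "a(x:=b) \<in> assignments M" using a b by (rule asg_upd)
    have h: "\<forall>a\<in>assignments M. \<forall>b\<in>M. sat M I \<theta> a \<longrightarrow> sat M I \<theta> (a(x := b)) \<longrightarrow>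
        (sat M I \<phi> a = sat M I \<phi> (a(x := b)))"
      using nd unfolding non_dependent_def .
    have u: "(a(x:=b))(x:=b') = a(x:=b')" by simp
    have t2: "sat M I \<theta> ((a(x:=b))(x:=b'))" unfolding u by (rule b'(2))
    have "sat M I \<phi> (a(x:=b)) = sat M I \<phi> (a(x:=b'))"
      using h[rule_format, OF \<open>a(x:=b) \<in> assignments M\<close> b'(1) th t2] unfolding u .
    then show "sat M I \<phi> (a(x:=b')) = sat M I \<phi> (a(x:=b))" by (rule sym)
  qed
  show ?thesis
  proof (cases e)
    case True
    then have "sat M I (rel e x \<theta> \<phi>) a = (\<exists>b'\<in>M. sat M I \<theta> (a(x:=b')) \<and> sat M I \<phi> (a(x:=b')))"
      by (simp add: rel_def)
    also have "\<dots> = sat M I \<phi> (a(x:=b))"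
    proof
      assume "\<exists>b'\<in>M. sat M I \<theta> (a(x:=b')) \<and> sat M I \<phi> (a(x:=b'))"
      then obtain b' where b': "b' \<in> M" "sat M I \<theta> (a(x:=b'))" and p: "sat M I \<phi> (a(x:=b'))"
        by blast
      show "sat M I \<phi> (a(x:=b))" using key[OF b'] p by (rule iffD1)
    next
      assume "sat M I \<phi> (a(x:=b))"
      then show "\<exists>b'\<in>M. sat M I \<theta> (a(x:=b')) \<and> sat M I \<phi> (a(x:=b'))"
        using b th by blast
    qed
    finally show ?thesis .
  next
    case False
    then have "sat M I (rel e x \<theta> \<phi>) a = (\<forall>b'\<in>M. sat M I \<theta> (a(x:=b')) \<longrightarrow> sat M I \<phi> (a(x:=b')))"
      by (simp add: rel_def All_def Imp_def)
    also have "\<dots> = sat M I \<phi> (a(x:=b))"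
    proof
      assume "\<forall>b'\<in>M. sat M I \<theta> (a(x:=b')) \<longrightarrow> sat M I \<phi> (a(x:=b'))"
      then show "sat M I \<phi> (a(x:=b))" using b th by blast
    next
      assume p: "sat M I \<phi> (a(x:=b))"
      show "\<forall>b'\<in>M. sat M I \<theta> (a(x:=b')) \<longrightarrow> sat M I \<phi> (a(x:=b'))"
      proof (intro ballI impI)
        fix b' assume "b' \<in> M" "sat M I \<theta> (a(x:=b'))"
        from key[OF this] p show "sat M I \<phi> (a(x:=b'))" by (rule iffD2)
      qed
    qed
    finally show ?thesis .
  qed
qed

lemma base:
  assumes "bargs f \<subseteq> {..<length \<phi>s}"
    and "\<forall>i<length \<phi>s. non_dependent M I (\<phi>s ! i) x \<theta>"
    and a: "a \<in> assignments M" and b: "b \<in> M" and th: "sat M I \<theta> (a(x:=b))"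
  shows "sat M I (bapp f (map (\<lambda>i. rel (c i) x \<theta> (\<phi>s ! i)) [0..<length \<phi>s])) a
       = sat M I (bapp f \<phi>s) (a(x:=b))"
  using assms(1)
proof (induction f)
  case (Arg i)
  then have i: "i < length \<phi>s" by simp
  have r: "sat M I (rel (c i) x \<theta> (\<phi>s ! i)) a = sat M I (\<phi>s ! i) (a(x:=b))"
    using rel_val[OF assms(2)[rule_format, OF i] a b th] .
  have e: "map (\<lambda>i. rel (c i) x \<theta> (\<phi>s ! i)) [0..<length \<phi>s] ! i = rel (c i) x \<theta> (\<phi>s ! i)"
    using i by simp
  show ?case unfolding bapp.simps e by (rule r)
qed auto

theorem mainTheorem11:
  fixes M :: "'a set" and I :: "'r \<Rightarrow> 'a list \<Rightarrow> bool"
    and x :: nat and f :: bexp and \<theta> :: "'r fo" and \<phi>s :: "'r fo list"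
    and qs :: "(bool \<times> nat) list"
    and c :: "nat \<Rightarrow> bool" and d :: bool
  assumes "M \<noteq> {}"
    and "bargs f \<subseteq> {..<length \<phi>s}"
    and "\<forall>i<length \<phi>s. non_dependent M I (\<phi>s ! i) x \<theta>"
    and "\<forall>q\<in>set qs. snd q \<noteq> x \<and> snd q \<notin> fv \<theta>"
    and "models M I (Ex x \<theta>)"
  shows "meaning M I (quants qs (bapp f (map (\<lambda>i. rel (c i) x \<theta> (\<phi>s ! i)) [0..<length \<phi>s])))
       = meaning M I (rel d x \<theta> (quants qs (bapp f \<phi>s)))"
proof -
  let ?L = "bapp f (map (\<lambda>i. rel (c i) x \<theta> (\<phi>s ! i)) [0..<length \<phi>s])"
  let ?R = "bapp f \<phi>s"
  have claim: "\<forall>a\<in>assignments M. \<forall>b\<in>M. sat M I \<theta> (a(x:=b)) \<longrightarrow>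
      (sat M I (quants qs ?L) a = sat M I (quants qs ?R) (a(x:=b)))"
    using assms(4)
  proof (induction qs rule: rev_induct)
    case Nil
    show ?case
    proof (intro ballI impI)
      fix a b assume "a \<in> assignments M" "b \<in> M" "sat M I \<theta> (a(x:=b))"
      then show "sat M I (quants [] ?L) a = sat M I (quants [] ?R) (a(x:=b))"
        unfolding quants.simps by (rule base[OF assms(2,3)])
    qed
  next
    case (snoc q qs)
    obtain e z where q: "q = (e, z)" by force
    have "snd q \<noteq> x \<and> snd q \<notin> fv \<theta>" using snoc.prems by simp
    then have zx: "z \<noteq> x" and zt: "z \<notin> fv \<theta>" using q by simp_all
    have pre: "\<forall>q\<in>set qs. snd q \<noteq> x \<and> snd q \<notin> fv \<theta>" using snoc.prems by simp
    have IH: "\<forall>a\<in>assignments M. \<forall>b\<in>M. sat M I \<theta> (a(x:=b)) \<longrightarrow>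
      (sat M I (quants qs ?L) a = sat M I (quants qs ?R) (a(x:=b)))"
      by (rule snoc.IH[OF pre])
    show ?case
    proof (intro ballI impI)
      fix a b assume a: "a \<in> assignments M" and b: "b \<in> M" and th: "sat M I \<theta> (a(x:=b))"
      have eq: "\<And>v. v \<in> M \<Longrightarrow> sat M I (quants qs ?L) (a(z:=v))
               = sat M I (quants qs ?R) ((a(x:=b))(z:=v))"
      proof -
        fix v assume v: "v \<in> M"
        have th': "sat M I \<theta> ((a(z:=v))(x:=b))"
        proof -
          have "\<forall>w\<in>fv \<theta>. ((a(z:=v))(x:=b)) w = (a(x:=b)) w" using zt by auto
          then show ?thesis using th coinc[of \<theta> "(a(z:=v))(x:=b)" "a(x:=b)" M I] by blast
        qed
        have "sat M I (quants qs ?L) (a(z:=v)) = sat M I (quants qs ?R) ((a(z:=v))(x:=b))"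
          by (rule IH[rule_format, OF asg_upd[OF a v] b th'])
        also have "(a(z:=v))(x:=b) = (a(x:=b))(z:=v)" using zx by (rule fun_upd_twist)
        finally show "sat M I (quants qs ?L) (a(z:=v))
               = sat M I (quants qs ?R) ((a(x:=b))(z:=v))" .
      qed
      show "sat M I (quants (qs @ [q]) ?L) a = sat M I (quants (qs @ [q]) ?R) (a(x:=b))"
      proof (cases e)
        case True
        then show ?thesis using eq by (simp add: q quants_snoc quant_def)
      next
        case False
        then show ?thesis using eq by (simp add: q quants_snoc quant_def All_def)
      qed
    qed
  qed
  show ?thesis
    unfolding meaning_def
  proof (rule Collect_cong, rule conj_cong[OF refl])
    fix a assume a: "a \<in> assignments M"
    have "sat M I (Ex x \<theta>) a" using assms(5) a unfolding models_def by blast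
    then obtain b0 where b0: "b0 \<in> M" "sat M I \<theta> (a(x:=b0))" by auto
    have all: "\<And>b. b \<in> M \<Longrightarrow> sat M I \<theta> (a(x:=b)) \<Longrightarrow>
        sat M I (quants qs ?R) (a(x:=b)) = sat M I (quants qs ?L) a"
      by (rule sym, rule claim[rule_format, OF a])
    show "sat M I (quants qs ?L) a = sat M I (rel d x \<theta> (quants qs ?R)) a"
    proof (cases d)
      case True
      then have "sat M I (rel d x \<theta> (quants qs ?R)) a
          = (\<exists>b\<in>M. sat M I \<theta> (a(x:=b)) \<and> sat M I (quants qs ?R) (a(x:=b)))"
        by (simp add: rel_def)
      also have "\<dots> = sat M I (quants qs ?L) a"
      proof
        assume "\<exists>b\<in>M. sat M I \<theta> (a(x:=b)) \<and> sat M I (quants qs ?R) (a(x:=b))"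
        then obtain b where b1: "b \<in> M" "sat M I \<theta> (a(x:=b))"
           and b2: "sat M I (quants qs ?R) (a(x:=b))"
          by blast
        then show "sat M I (quants qs ?L) a" using all[OF b1] by simp
      next
        assume "sat M I (quants qs ?L) a"
        then have "sat M I (quants qs ?R) (a(x:=b0))" using all[OF b0] by simp
        then show "\<exists>b\<in>M. sat M I \<theta> (a(x:=b)) \<and> sat M I (quants qs ?R) (a(x:=b))"
          using b0 by blast
      qed
      finally show ?thesis by (rule sym)
    next
      case False
      then have "sat M I (rel d x \<theta> (quants qs ?R)) a
          = (\<forall>b\<in>M. sat M I \<theta> (a(x:=b)) \<longrightarrow> sat M I (quants qs ?R) (a(x:=b)))"
        by (simp add: rel_def All_def Imp_def)
      also have "\<dots> = sat M I (quants qs ?L) a"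
      proof
        assume h: "\<forall>b\<in>M. sat M I \<theta> (a(x:=b)) \<longrightarrow> sat M I (quants qs ?R) (a(x:=b))"
        have "sat M I (quants qs ?R) (a(x:=b0))" using h b0 by blast
        then show "sat M I (quants qs ?L) a" using all[OF b0] by simp
      next
        assume h: "sat M I (quants qs ?L) a"
        show "\<forall>b\<in>M. sat M I \<theta> (a(x:=b)) \<longrightarrow> sat M I (quants qs ?R) (a(x:=b))"
        proof (intro ballI impI)
          fix b assume b1: "b \<in> M" "sat M I \<theta> (a(x:=b))"
          show "sat M I (quants qs ?R) (a(x:=b))" using all[OF b1] h by simp
        qed
      qed
      finally show ?thesis by (rule sym)
    qed
  qed
qed

end
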